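(* Let $\alpha$ be a propositional variable. There is no formula $\theta$ built from propositional variables and $\bot$ using only $\land,\lor,\rightarrow,\nabla$ (in particular not containing $\Delta$) such that for every nIML1-F1-model and every world $w$ of it, $w\Vdash\Delta\alpha$ iff $w\Vdash\theta$. That is, $\Delta$ is not definable in terms of the other connectives.
   Context: Formulas are built from a denumerable set $PV$ of propositional variables and $\bot$ using binary $\land,\lor,\rightarrow$ and unary $\Delta,\nabla$. An nIML1-model is a triple $\langle W,\mathcal{N},V\rangle$ with $W\neq\emptyset$, $\mathcal{N}:W\to P(P(W))$ satisfying for all $w$: (a) $w\in\bigcap\mathcal{N}_w$; (b) $\bigcap\mathcal{N}_w\in\mathcal{N}_w$; (c) $u\in\bigcap\mathcal{N}_w\Rightarrow\bigcap\mathcal{N}_u\subseteq\bigcap\mathcal{N}_w$; (d) $\bigcap\mathcal{N}_w\subseteq X\subseteq\bigcup\mathcal{N}_w\Rightarrow X\in\mathcal{N}_w$; (e) $u\in\bigcap\mathcal{N}_w\Rightarrow\bigcup\mathcal{N}_u\subseteq\bigcup\mathcal{N}_w$ ($\bigcap\mathcal{N}_w$, $\bigcup\mathcal{N}_w$ the intersection and union of the family $\mathcal{N}_w$), and $V:PV\to P(W)$ with $w\in V(q)\Rightarrow\bigcap\mathcal{N}_w\subseteq V(q)$. It is an nIML1-F1-model if moreover: whenever $u\in\bigcap\mathcal{N}_w$ and $v\in\bigcup\mathcal{N}_w$, there is $z$ with $z\in\bigcup\mathcal{N}_u\cap\bigcap\mathcal{N}_v$. Forcing: atoms via $V$; $\bot$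 never; $\land,\lor$ pointwise; $w\Vdash\varphi\rightarrow\psi$ iff every $v\in\bigcap\mathcal{N}_w$ has $v\nVdash\varphi$ or $v\Vdash\psi$; $w\Vdash\Delta\varphi$ iff every $v\in\bigcup\mathcal{N}_w$ has $v\Vdash\varphi$; $w\Vdash\nabla\varphi$ iff some $v\in\bigcup\mathcal{N}_w$ has $v\Vdash\varphi$. *)

theory Defs
  imports Main
begin

datatype fm =
    Var nat
  | Bot
  | And fm fm
  | Or fm fm
  | Imp fm fm
  | Dlt fm
  | Nbl fm

fun delta_free :: "fm \<Rightarrow> bool" where
  "delta_free (Var q) = True"
| "delta_free Bot = True"
| "delta_free (And a b) = (delta_free a \<and> delta_free b)"
| "delta_free (Or a b) = (delta_free a \<and> delta_free b)"
| "delta_free (Imp a b) = (delta_free a \<and> delta_free b)"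
| "delta_free (Dlt a) = False"
| "delta_free (Nbl a) = delta_free a"

definition nIML1_model :: "'w set \<Rightarrow> ('w \<Rightarrow> 'w set set) \<Rightarrow> (nat \<Rightarrow> 'w set) \<Rightarrow> bool" where
  "nIML1_model W N V \<longleftrightarrow>
     W \<noteq> {} \<and>
     (\<forall>w\<in>W. N w \<subseteq> Pow W) \<and>
     (\<forall>w\<in>W. w \<in> \<Inter>(N w)) \<and>
     (\<forall>w\<in>W. \<Inter>(N w) \<in> N w) \<and>
     (\<forall>w\<in>W. \<forall>u\<in>\<Inter>(N w). \<Inter>(N u) \<subseteq> \<Inter>(N w)) \<and>
     (\<forall>w\<in>W. \<forall>X. \<Inter>(N w) \<subseteq> X \<and> X \<subseteq> \<Union>(N w) \<longrightarrow> X \<in> N w) \<and>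
     (\<forall>w\<in>W. \<forall>u\<in>\<Inter>(N w). \<Union>(N u) \<subseteq> \<Union>(N w)) \<and>
     (\<forall>q. V q \<subseteq> W) \<and>
     (\<forall>q. \<forall>w\<in>W. w \<in> V q \<longrightarrow> \<Inter>(N w) \<subseteq> V q)"

definition nIML1_F1_model :: "'w set \<Rightarrow> ('w \<Rightarrow> 'w set set) \<Rightarrow> (nat \<Rightarrow> 'w set) \<Rightarrow> bool" where
  "nIML1_F1_model W N V \<longleftrightarrow>
     nIML1_model W N V \<and>
     (\<forall>w\<in>W. \<forall>u\<in>\<Inter>(N w). \<forall>v\<in>\<Union>(N w). \<exists>z. z \<in> \<Union>(N u) \<inter> \<Inter>(N v))"

fun forces :: "('w \<Rightarrow> 'w set set) \<Rightarrow> (nat \<Rightarrow> 'w set) \<Rightarrow> 'w \<Rightarrow> fm \<Rightarrow> bool" where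
  "forces N V w (Var q) = (w \<in> V q)"
| "forces N V w Bot = False"
| "forces N V w (And a b) = (forces N V w a \<and> forces N V w b)"
| "forces N V w (Or a b) = (forces N V w a \<or> forces N V w b)"
| "forces N V w (Imp a b) =
     (\<forall>v\<in>\<Inter>(N w). \<not> forces N V v a \<or> forces N V v b)"
| "forces N V w (Dlt a) = (\<forall>v\<in>\<Union>(N w). forces N V v a)"
| "forces N V w (Nbl a) = (\<exists>v\<in>\<Union>(N w). forces N V v a)"

end

theory Submission
  imports Defs
begin

definition NN :: "nat \<Rightarrow> nat set set" where
  "NN n = (if n = 0 then {{0}} else if n = 1 then {{0,1}}
     else if n = 2 then {X. {2} \<subseteq> X \<and> X \<subseteq> {0,2}}
     else if n = 3 then {X. {3} \<subseteq> X \<and> X \<subseteq> {0,1,3}} else {})"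

definition II :: "nat \<Rightarrow> nat set" where
  "II n = (if n = 0 then {0} else if n = 1 then {0,1} else if n = 2 then {2} else {3})"

definition UU :: "nat \<Rightarrow> nat set" where
  "UU n = (if n = 0 then {0} else if n = 1 then {0,1} else if n = 2 then {0,2} else {0,1,3})"

definition VV :: "nat \<Rightarrow> nat set" where "VV q = {0,2,3}"

lemma le3: "(n::nat) \<le> 3 \<longleftrightarrow> n = 0 \<or> n = 1 \<or> n = 2 \<or> n = 3" by auto

lemma NN_iff: "n \<le> 3 \<Longrightarrow> X \<in> NN n \<longleftrightarrow> II n \<subseteq> X \<and> X \<subseteq> UU n"
  unfolding NN_def II_def UU_def by auto

lemma II_in: "n \<le> 3 \<Longrightarrow> II n \<in> NN n"
proof -
  assume n: "n \<le> 3"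
  have "II n \<subseteq> UU n" using n unfolding le3 II_def UU_def by auto
  then show ?thesis by (simp add: NN_iff n)
qed

lemma UU_in: "n \<le> 3 \<Longrightarrow> UU n \<in> NN n"
proof -
  assume n: "n \<le> 3"
  have "II n \<subseteq> UU n" using n unfolding le3 II_def UU_def by auto
  then show ?thesis by (simp add: NN_iff n)
qed

lemma Inter_NN: "n \<le> 3 \<Longrightarrow> \<Inter>(NN n) = II n"
proof
  assume n: "n \<le> 3"
  show "\<Inter>(NN n) \<subseteq> II n" using II_in[OF n] by auto
  show "II n \<subseteq> \<Inter>(NN n)" using NN_iff[OF n] by auto
qed

lemma Union_NN: "n \<le> 3 \<Longrightarrow> \<Union>(NN n) = UU n"
proof
  assume n: "n \<le> 3"
  show "UU n \<subseteq> \<Union>(NN n)" using UU_in[OF n] by auto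
  show "\<Union>(NN n) \<subseteq> UU n" using NN_iff[OF n] by auto
qed


lemma model: "nIML1_F1_model {0,1,2,3} NN VV"
proof -
  have W: "\<And>w. w \<in> {0,1,2,3::nat} \<Longrightarrow> w \<le> 3" by auto
  have E: "\<Inter>(NN 0) = {0}" "\<Inter>(NN 1) = {0,1}" "\<Inter>(NN 2) = {2}" "\<Inter>(NN 3) = {3}"
    "\<Union>(NN 0) = {0}" "\<Union>(NN 1) = {0,1}" "\<Union>(NN 2) = {0,2}" "\<Union>(NN 3) = {0,1,3}"
    by (simp_all add: Inter_NN Union_NN II_def UU_def)
  have E1: "\<Inter>(NN (Suc 0)) = {0,1}" "\<Union>(NN (Suc 0)) = {0,1}" using E by simp_all
  have sub: "\<forall>w \<in> {0,1,2,3::nat}. NN w \<subseteq> Pow {0,1,2,3}"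
    using NN_iff W by (auto simp: UU_def II_def split: if_splits)
  have d: "\<forall>w\<in>{0,1,2,3::nat}. \<forall>X. \<Inter>(NN w) \<subseteq> X \<and> X \<subseteq> \<Union>(NN w) \<longrightarrow> X \<in> NN w"
    using NN_iff W Inter_NN Union_NN by auto
  have i: "\<forall>w\<in>{0,1,2,3::nat}. \<Inter>(NN w) \<in> NN w"
    using II_in W Inter_NN by auto
  have f: "\<forall>w\<in>{0,1,2,3::nat}. \<forall>u\<in>\<Inter>(NN w). \<forall>v\<in>\<Union>(NN w). \<exists>z. z \<in> \<Union>(NN u) \<inter> \<Inter>(NN v)"
  proof (intro ballI)
    fix w u v assume w: "w \<in> {0,1,2,3::nat}" and u: "u \<in> \<Inter>(NN w)" and v: "v \<in> \<Union>(NN w)"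
    have "w \<le> 3" using w by auto
    then have u': "u \<in> II w" and v': "v \<in> UU w" using u v Inter_NN Union_NN by auto
    have "0 \<in> UU u \<inter> II v \<or> v \<in> UU u \<inter> II v" using w u' v' by (auto simp: II_def UU_def)
    moreover have "u \<le> 3" "v \<le> 3" using w u' v' by (auto simp: II_def UU_def split: if_splits)
    ultimately show "\<exists>z. z \<in> \<Union>(NN u) \<inter> \<Inter>(NN v)" using Inter_NN Union_NN by metis
  qed
  show ?thesis
    unfolding nIML1_F1_model_def nIML1_model_def
    using sub d i f by (simp del: Inter_iff Union_iff add: E E1 VV_def)
qed

lemma inv: "delta_free \<phi> \<Longrightarrow> (forces NN VV 2 \<phi> \<longleftrightarrow> forces NN VV 3 \<phi>) \<and>
   (forces NN VV 1 \<phi> \<longrightarrow> forces NN VV 0 \<phi>)"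
proof (induction \<phi>)
  case (Imp a b)
  then show ?case by (simp add: Inter_NN II_def)
next
  case (Nbl a)
  then show ?case by (auto simp add: Union_NN UU_def)
qed (auto simp: VV_def)

theorem lemma9p3:
  fixes \<alpha> :: nat
  shows "\<not> (\<exists>\<theta>. delta_free \<theta> \<and>
            (\<forall>(W :: nat set) N V. nIML1_F1_model W N V \<longrightarrow>
               (\<forall>w\<in>W. forces N V w (Dlt (Var \<alpha>)) \<longleftrightarrow> forces N V w \<theta>)))"
proof
  assume "\<exists>\<theta>. delta_free \<theta> \<and>
            (\<forall>(W :: nat set) N V. nIML1_F1_model W N V \<longrightarrow>
               (\<forall>w\<in>W. forces N V w (Dlt (Var \<alpha>)) \<longleftrightarrow> forces N V w \<theta>))"
  then obtain \<theta> where df: "delta_free \<theta>" and h: "\<forall>(W :: nat set) N V. nIML1_F1_model W N V \<longrightarrow>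
               (\<forall>w\<in>W. forces N V w (Dlt (Var \<alpha>)) \<longleftrightarrow> forces N V w \<theta>)" by blast
  have h2: "\<forall>w\<in>{0,1,2,3}. forces NN VV w (Dlt (Var \<alpha>)) \<longleftrightarrow> forces NN VV w \<theta>"
    using h model by blast
  have "forces NN VV 2 (Dlt (Var \<alpha>))" by (simp add: Union_NN UU_def VV_def)
  moreover have "\<not> forces NN VV 3 (Dlt (Var \<alpha>))" by (simp add: Union_NN UU_def VV_def)
  moreover have "forces NN VV 2 \<theta> \<longleftrightarrow> forces NN VV 3 \<theta>" using inv[OF df] by blast
  ultimately show False using h2 by blast
qed

end
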